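(* For every integer $n\geqslant 2$ there exists a finite simple graph $G$ with $\mathrm{diam}(G)=2$ and $\mathrm{diam}(D_2(G))=n$.
   Context: All graphs are finite, simple and undirected. For a graph $G$, $\mathrm{d}_G(x,y)$ denotes the length of a shortest path between $x$ and $y$, and $\mathrm{diam}(G)$ is the maximum distance between vertices of $G$. The $2$-distance graph $D_2(G)$ of $G$ is the graph with vertex set $V(G)$ in which two vertices $x,y$ are adjacent if and only if $\mathrm{d}_G(x,y)=2$. *)

theory Defs
  imports Main
begin

definition simple_graph :: "'a set \<Rightarrow> ('a \<Rightarrow> 'a \<Rightarrow> bool) \<Rightarrow> bool" where
  "simple_graph V E \<longleftrightarrow> finite V \<and> (\<forall>x y. E x y \<longrightarrow> x \<in> V \<and> y \<in> V)
     \<and> (\<forall>x. \<not> E x x) \<and> (\<forall>x y. E x y \<longrightarrow> E y x)"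

definition walk :: "'a set \<Rightarrow> ('a \<Rightarrow> 'a \<Rightarrow> bool) \<Rightarrow> 'a list \<Rightarrow> bool" where
  "walk V E p \<longleftrightarrow> p \<noteq> [] \<and> set p \<subseteq> V \<and> (\<forall>i. Suc i < length p \<longrightarrow> E (p ! i) (p ! Suc i))"

definition reachable_in :: "'a set \<Rightarrow> ('a \<Rightarrow> 'a \<Rightarrow> bool) \<Rightarrow> nat \<Rightarrow> 'a \<Rightarrow> 'a \<Rightarrow> bool" where
  "reachable_in V E k x y \<longleftrightarrow>
     (\<exists>p. walk V E p \<and> length p = Suc k \<and> hd p = x \<and> last p = y)"

definition dist :: "'a set \<Rightarrow> ('a \<Rightarrow> 'a \<Rightarrow> bool) \<Rightarrow> 'a \<Rightarrow> 'a \<Rightarrow> nat" where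
  "dist V E x y = (LEAST k. reachable_in V E k x y)"

definition connected_graph :: "'a set \<Rightarrow> ('a \<Rightarrow> 'a \<Rightarrow> bool) \<Rightarrow> bool" where
  "connected_graph V E \<longleftrightarrow> (\<forall>x\<in>V. \<forall>y\<in>V. \<exists>k. reachable_in V E k x y)"

text \<open>diam(G) = d holds iff G is connected (so that all distances are finite),
  nonempty, and the maximum distance between vertices equals d.\<close>
definition has_diam :: "'a set \<Rightarrow> ('a \<Rightarrow> 'a \<Rightarrow> bool) \<Rightarrow> nat \<Rightarrow> bool" where
  "has_diam V E d \<longleftrightarrow> V \<noteq> {} \<and> connected_graph V E \<and>
     (\<forall>x\<in>V. \<forall>y\<in>V. dist V E x y \<le> d) \<and> (\<exists>x\<in>V. \<exists>y\<in>V. dist V E x y = d)"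

definition dist2_graph :: "'a set \<Rightarrow> ('a \<Rightarrow> 'a \<Rightarrow> bool) \<Rightarrow> 'a \<Rightarrow> 'a \<Rightarrow> bool" where
  "dist2_graph V E x y \<longleftrightarrow> x \<in> V \<and> y \<in> V \<and> (\<exists>k. reachable_in V E k x y) \<and> dist V E x y = 2"

end

theory Submission
  imports Defs
begin

lemma reach0: "x \<in> V \<Longrightarrow> reachable_in V E 0 x x"
  unfolding reachable_in_def walk_def by (rule exI[of _ "[x]"]) auto

lemma reach1: "E x y \<Longrightarrow> x \<in> V \<Longrightarrow> y \<in> V \<Longrightarrow> reachable_in V E 1 x y"
  unfolding reachable_in_def walk_def
  by (rule exI[of _ "[x,y]"]) (auto simp: less_Suc_eq)

lemma reach2: "E x w \<Longrightarrow> E w y \<Longrightarrow> x \<in> V \<Longrightarrow> w \<in> V \<Longrightarrow> y \<in> V \<Longrightarrow> reachable_in V E 2 x y"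
  unfolding reachable_in_def walk_def
  by (rule exI[of _ "[x,w,y]"]) (auto simp: less_Suc_eq nth_Cons split: nat.splits)

lemma reach0D: "reachable_in V E 0 x y \<Longrightarrow> x = y"
  unfolding reachable_in_def walk_def
  by (auto simp: length_Suc_conv)

lemma reach1D: "reachable_in V E 1 x y \<Longrightarrow> E x y"
  unfolding reachable_in_def walk_def
  by (auto simp: length_Suc_conv)

lemma reach_V: "reachable_in V E k x y \<Longrightarrow> x \<in> V \<and> y \<in> V"
  unfolding reachable_in_def walk_def
  by (metis empty_iff hd_in_set last_in_set list.set(1) subset_code(1))

lemma dist_eq: "reachable_in V E k x y \<Longrightarrow> (\<forall>j<k. \<not> reachable_in V E j x y) \<Longrightarrow> dist V E x y = k"
  unfolding dist_def by (rule Least_equality) (auto simp: not_less[symmetric])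

lemma dist_le: "reachable_in V E k x y \<Longrightarrow> dist V E x y \<le> k"
  unfolding dist_def by (rule Least_le)

lemma reach_rev:
  assumes sym: "\<forall>a b. E a b \<longrightarrow> E b a" and r: "reachable_in V E k x y"
  shows "reachable_in V E k y x"
proof -
  obtain p where p: "walk V E p" "length p = Suc k" "hd p = x" "last p = y"
    using r unfolding reachable_in_def by blast
  have "walk V E (rev p)"
    unfolding walk_def
  proof (intro conjI allI impI)
    show "rev p \<noteq> []" using p by (auto simp: walk_def)
    show "set (rev p) \<subseteq> V" using p by (auto simp: walk_def)
    fix i assume i: "Suc i < length (rev p)"
    have e: "E (p ! (length p - Suc (Suc i))) (p ! Suc (length p - Suc (Suc i)))"
      using p(1) i unfolding walk_def by auto
    have "Suc (length p - Suc (Suc i)) = length p - Suc i" using i by auto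
    then show "E (rev p ! i) (rev p ! Suc i)"
      using e sym i by (auto simp: rev_nth)
  qed
  moreover have "hd (rev p) = y" "last (rev p) = x" using p
    by (auto simp: hd_rev last_rev)
  ultimately show ?thesis unfolding reachable_in_def using p by auto
qed

definition Hc :: "nat \<Rightarrow> nat \<Rightarrow> nat \<Rightarrow> bool" where
  "Hc n x y \<longleftrightarrow> x < Suc (2*n) \<and> y < Suc (2*n) \<and>
     (y = Suc x \<or> x = Suc y \<or> (x = 0 \<and> y = 2*n) \<or> (x = 2*n \<and> y = 0))"

definition Gc :: "nat \<Rightarrow> nat \<Rightarrow> nat \<Rightarrow> bool" where
  "Gc n x y \<longleftrightarrow> x < Suc (2*n) \<and> y < Suc (2*n) \<and> x \<noteq> y \<and> \<not> Hc n x y"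

lemma wlemma: "n \<ge> (2::nat) \<Longrightarrow> (y = Suc x \<or> (x = 2*n \<and> y = 0)) \<Longrightarrow> Hc n x y \<Longrightarrow>
  w = (if x + 3 \<le> 2*n then x + 3 else x + 2 - 2*n) \<Longrightarrow> Gc n y w \<and> Gc n w x"
  unfolding Gc_def Hc_def by (cases "x+3 \<le> 2*n"; simp only: if_True if_False; presburger)

lemma common:
  assumes n: "n \<ge> 2" and h: "Hc n x y"
  shows "\<exists>w. Gc n x w \<and> Gc n w y"
proof -
  have "\<exists>w. Gc n y w \<and> Gc n w x" if "y = Suc x \<or> (x = 2*n \<and> y = 0)" "Hc n x y" for x y
  proof -
    define w where "w = (if x + 3 \<le> 2*n then x + 3 else x + 2 - 2*n)"
    have "Gc n y w \<and> Gc n w x" using wlemma[OF n that w_def] .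
    then show ?thesis by blast
  qed
  note L = this
  have sy: "Gc n a b \<Longrightarrow> Gc n b a" for a b unfolding Gc_def Hc_def by auto
  have hs: "Hc n y x" using h unfolding Hc_def by auto
  have "(y = Suc x \<or> (x = 2*n \<and> y = 0)) \<or> (x = Suc y \<or> (y = 2*n \<and> x = 0))"
    using h unfolding Hc_def by auto
  then show ?thesis
  proof
    assume a: "y = Suc x \<or> (x = 2*n \<and> y = 0)"
    then obtain w where "Gc n y w \<and> Gc n w x" using L[OF a h] by blast
    then show ?thesis using sy by blast
  next
    assume a: "x = Suc y \<or> (y = 2*n \<and> x = 0)"
    show ?thesis using L[OF a hs] by blast
  qed
qed

lemma Hstep: "Hc n (a mod Suc (2*n)) (Suc a mod Suc (2*n))"
proof -
  define r where "r = a mod Suc (2*n)"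
  have r: "r < Suc (2*n)" unfolding r_def by simp
  have e: "Suc a mod Suc (2*n) = (if Suc r = Suc (2*n) then 0 else Suc r)"
    unfolding r_def by (simp add: mod_Suc)
  show ?thesis unfolding r_def[symmetric] e Hc_def using r by auto
qed

lemma cyc_reach:
  assumes "x < Suc (2*n)"
  shows "reachable_in {..<Suc (2*n)} (Hc n) d x ((x + d) mod Suc (2*n))"
  unfolding reachable_in_def
proof (rule exI[of _ "map (\<lambda>i. (x + i) mod Suc (2*n)) [0..<Suc d]"], intro conjI)
  show "walk {..<Suc (2*n)} (Hc n) (map (\<lambda>i. (x + i) mod Suc (2*n)) [0..<Suc d])"
    unfolding walk_def using Hstep[of n] by (auto simp del: upt_Suc)
qed (use assms in \<open>auto simp: hd_map last_map simp del: upt_Suc\<close>)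

lemma lower:
  assumes w: "walk {..<Suc (2*n)} (Hc n) p" and h: "hd p = 0"
  shows "i < length p \<Longrightarrow> min (p!i) (Suc (2*n) - p!i) \<le> i"
proof (induction i)
  case 0
  then show ?case using h w by (cases p) (auto simp: walk_def)
next
  case (Suc i)
  then have "Hc n (p!i) (p!Suc i)" using w unfolding walk_def by auto
  then show ?case using Suc unfolding Hc_def by auto
qed

lemma Hsym: "\<forall>a b. Hc n a b \<longrightarrow> Hc n b a" unfolding Hc_def by auto

lemma H_reach:
  assumes x: "x < Suc (2*n)" and y: "y < Suc (2*n)"
  shows "\<exists>k\<le>n. reachable_in {..<Suc (2*n)} (Hc n) k x y"
proof (cases "x \<le> y")
  case True
  show ?thesis
  proof (cases "y - x \<le> n")
    case True
    then show ?thesis using cyc_reach[OF x, of "y - x"] \<open>x \<le> y\<close> y by auto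
  next
    case False
    have "(y + (Suc (2*n) - (y - x))) mod Suc (2*n) = x"
      using \<open>x \<le> y\<close> y x by (simp add: mod_if)
    then have "reachable_in {..<Suc (2*n)} (Hc n) (Suc (2*n) - (y - x)) y x"
      using cyc_reach[OF y, of "Suc (2*n) - (y - x)"] by simp
    then show ?thesis using reach_rev[OF Hsym] False by (intro exI[of _ "Suc (2*n) - (y - x)"]) auto
  qed
next
  case False
  show ?thesis
  proof (cases "x - y \<le> n")
    case True
    then show ?thesis using cyc_reach[OF y, of "x - y"] False reach_rev[OF Hsym] x by auto
  next
    case F2: False
    have "(x + (Suc (2*n) - (x - y))) mod Suc (2*n) = y"
      using False y x by (simp add: mod_if)
    then have "reachable_in {..<Suc (2*n)} (Hc n) (Suc (2*n) - (x - y)) x y"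
      using cyc_reach[OF x, of "Suc (2*n) - (x - y)"] by simp
    then show ?thesis using F2 by (intro exI[of _ "Suc (2*n) - (x - y)"]) auto
  qed
qed

lemma H_dist_0n: "dist {..<Suc (2*n)} (Hc n) 0 n = n"
proof (rule dist_eq)
  show "reachable_in {..<Suc (2*n)} (Hc n) n 0 n" using cyc_reach[of 0 n n] by simp
  show "\<forall>j<n. \<not> reachable_in {..<Suc (2*n)} (Hc n) j 0 n"
  proof (intro allI impI notI)
    fix j assume j: "j < n" and r: "reachable_in {..<Suc (2*n)} (Hc n) j 0 n"
    then obtain p where p: "walk {..<Suc (2*n)} (Hc n) p" "length p = Suc j" "hd p = 0" "last p = n"
      unfolding reachable_in_def by blast
    have "p \<noteq> []" using p(2) by auto
    then have "last p = p ! j" using p(2) by (simp add: last_conv_nth)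
    then show False using lower[OF p(1) p(3), of j] p j by auto
  qed
qed

lemma G_self: "x < Suc (2*n) \<Longrightarrow> reachable_in {..<Suc (2*n)} (Gc n) 0 x x \<and> dist {..<Suc (2*n)} (Gc n) x x = 0"
  using reach0[of x "{..<Suc (2*n)}" "Gc n"] dist_le[of "{..<Suc (2*n)}" "Gc n" 0 x x] by simp

lemma G_adj:
  assumes g: "Gc n x y"
  shows "reachable_in {..<Suc (2*n)} (Gc n) 1 x y \<and> dist {..<Suc (2*n)} (Gc n) x y = 1"
proof -
  have x: "x < Suc (2*n)" and y: "y < Suc (2*n)" and ne: "x \<noteq> y" using g unfolding Gc_def by auto
  have r: "reachable_in {..<Suc (2*n)} (Gc n) 1 x y" using reach1[of "Gc n" x y] g x y by simp
  have "\<forall>j<1. \<not> reachable_in {..<Suc (2*n)} (Gc n) j x y"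
    using reach0D[of _ "Gc n" x y] ne by auto
  then show ?thesis using r dist_eq[OF r] by blast
qed

lemma G_non:
  assumes n: "n \<ge> 2" and h: "Hc n x y"
  shows "reachable_in {..<Suc (2*n)} (Gc n) 2 x y \<and> dist {..<Suc (2*n)} (Gc n) x y = 2"
proof -
  have x: "x < Suc (2*n)" and y: "y < Suc (2*n)" and ne: "x \<noteq> y" and ng: "\<not> Gc n x y"
    using h n unfolding Hc_def Gc_def by auto
  obtain w where w: "Gc n x w" "Gc n w y" using common[OF n h] by blast
  have wV: "w < Suc (2*n)" using w unfolding Gc_def by auto
  have r: "reachable_in {..<Suc (2*n)} (Gc n) 2 x y"
    using reach2[of "Gc n" x w y "{..<Suc (2*n)}"] w x y wV by simp
  have "\<not> reachable_in {..<Suc (2*n)} (Gc n) j x y" if "j < 2" for j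
  proof
    assume rj: "reachable_in {..<Suc (2*n)} (Gc n) j x y"
    have "j = 0 \<or> j = 1" using that by auto
    then show False
    proof
      assume "j = 0" then show False using reach0D[of _ "Gc n" x y] rj ne by simp
    next
      assume "j = 1" then show False using reach1D[of _ "Gc n" x y] rj ng by simp
    qed
  qed
  then show ?thesis using r dist_eq[OF r] by blast
qed

lemma G_cases: "x < Suc (2*n) \<Longrightarrow> y < Suc (2*n) \<Longrightarrow> x = y \<or> Gc n x y \<or> Hc n x y"
  unfolding Gc_def by blast

lemma G_reach_dist:
  assumes n: "n \<ge> 2" and x: "x < Suc (2*n)" and y: "y < Suc (2*n)"
  shows "\<exists>k\<le>2. reachable_in {..<Suc (2*n)} (Gc n) k x y \<and> dist {..<Suc (2*n)} (Gc n) x y = k"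
  using G_cases[OF x y] G_self[OF x] G_adj G_non[OF n] by (metis le_refl one_le_numeral zero_le)

lemma D2_eq:
  assumes n: "n \<ge> 2"
  shows "dist2_graph {..<Suc (2*n)} (Gc n) = Hc n"
proof (intro ext iffI)
  fix x y
  assume d: "dist2_graph {..<Suc (2*n)} (Gc n) x y"
  then have x: "x < Suc (2*n)" and y: "y < Suc (2*n)" and dd: "dist {..<Suc (2*n)} (Gc n) x y = 2"
    unfolding dist2_graph_def by auto
  have "x \<noteq> y" using G_self[OF x] dd by auto
  moreover have "\<not> Gc n x y" using G_adj[of n x y] dd by auto
  ultimately show "Hc n x y" using G_cases[OF x y] by blast
next
  fix x y
  assume h: "Hc n x y"
  then have x: "x < Suc (2*n)" and y: "y < Suc (2*n)" unfolding Hc_def by auto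
  show "dist2_graph {..<Suc (2*n)} (Gc n) x y"
    unfolding dist2_graph_def using x y G_non[OF n h] by auto
qed

theorem mainTheorem1:
  fixes n :: nat
  assumes "n \<ge> 2"
  shows "\<exists>(V :: nat set) E. simple_graph V E \<and> has_diam V E 2
           \<and> has_diam V (dist2_graph V E) n"
proof (intro exI conjI)
  let ?V = "{..<Suc (2*n)}"
  show "simple_graph ?V (Gc n)" unfolding simple_graph_def Gc_def Hc_def by auto
  show "has_diam ?V (Gc n) 2"
    unfolding has_diam_def connected_graph_def
  proof (intro conjI)
    show "?V \<noteq> {}" by auto
    show "\<forall>x\<in>?V. \<forall>y\<in>?V. \<exists>k. reachable_in ?V (Gc n) k x y"
    proof (intro ballI)
      fix x y assume "x \<in> ?V" "y \<in> ?V"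
      then show "\<exists>k. reachable_in ?V (Gc n) k x y" using G_reach_dist[OF assms, of x y] by auto
    qed
    show "\<forall>x\<in>?V. \<forall>y\<in>?V. dist ?V (Gc n) x y \<le> 2"
    proof (intro ballI)
      fix x y assume "x \<in> ?V" "y \<in> ?V"
      then show "dist ?V (Gc n) x y \<le> 2" using G_reach_dist[OF assms, of x y] by auto
    qed
    have "Hc n 0 1" unfolding Hc_def using assms by auto
    then have "dist ?V (Gc n) 0 1 = 2" using G_non[OF assms] by blast
    moreover have "(0::nat) \<in> ?V" "(1::nat) \<in> ?V" using assms by auto
    ultimately show "\<exists>x\<in>?V. \<exists>y\<in>?V. dist ?V (Gc n) x y = 2" by blast
  qed
  show "has_diam ?V (dist2_graph ?V (Gc n)) n"
    unfolding D2_eq[OF assms] has_diam_def connected_graph_def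
  proof (intro conjI)
    show "?V \<noteq> {}" by auto
    show "\<forall>x\<in>?V. \<forall>y\<in>?V. \<exists>k. reachable_in ?V (Hc n) k x y"
    proof (intro ballI)
      fix x y assume "x \<in> ?V" "y \<in> ?V"
      then show "\<exists>k. reachable_in ?V (Hc n) k x y" using H_reach[of x n y] by auto
    qed
    show "\<forall>x\<in>?V. \<forall>y\<in>?V. dist ?V (Hc n) x y \<le> n"
    proof (intro ballI)
      fix x y assume "x \<in> ?V" "y \<in> ?V"
      then obtain k where "k \<le> n" "reachable_in ?V (Hc n) k x y" using H_reach[of x n y] by auto
      then show "dist ?V (Hc n) x y \<le> n" using dist_le[of ?V "Hc n" k x y] by simp
    qed
    have "(0::nat) \<in> ?V" "n \<in> ?V" by auto
    then show "\<exists>x\<in>?V. \<exists>y\<in>?V. dist ?V (Hc n) x y = n"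
      using H_dist_0n[of n] by blast
  qed
qed

end
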